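(* Let $p$ be a prime and let $\mathcal{S}$ be an infinite abelian group of exponent $p$ (i.e. $pg=0$ for all $g$), in the signature $(+,-,0)$. Let $I$ be the set of finite subgroups of $\mathcal{S}$, ordered by inclusion. Then $\lim_I\mathrm{Th}(A^* )=\mathrm{Th}(\mathcal{S}^* )$, where $A$ ranges over $I$.
   Context: For a structure $\mathcal{T}$ with universe $T$, $\mathrm{Th}(\mathcal{T}^* )$ is the set of sentences in $(+,-,0)$ expanded by a constant for each element of $T$ that are true in $\mathcal{T}$; these are regarded as subsets of the set of sentences with constants from the universe of $\mathcal{S}$. For a family $\{\Delta_i\}_{i\in I}$ indexed by a directed set: $\limsup_I \Delta_i=\{\theta: \forall i\ \exists j\ge i\ [\theta\in\Delta_j]\}$, $\liminf_I \Delta_i=\{\theta: \exists i\ \forall j\ge i\ [\theta\in\Delta_j]\}$, and $\lim_I\Delta_i=\Delta$ means both equal $\Delta$. *)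

theory Defs
  imports Main "HOL-Computational_Algebra.Primes"
begin

text \<open>First-order language in the signature (+,-,0) of abelian groups, with
  constants taken from the carrier type 'a (names for elements of the big
  structure S).  Variables are natural numbers.\<close>

datatype 'a trm = Var nat | Cst 'a | Zero | Plus "'a trm" "'a trm" | Minus "'a trm"

datatype 'a fm = FFalse | Eq "'a trm" "'a trm" | FNot "'a fm" | FAnd "'a fm" "'a fm"
  | FOr "'a fm" "'a fm" | FImp "'a fm" "'a fm" | FEx nat "'a fm" | FAll nat "'a fm"

primrec tval :: "(nat \<Rightarrow> 'a::ab_group_add) \<Rightarrow> 'a trm \<Rightarrow> 'a" where
  "tval e (Var n) = e n"
| "tval e (Cst c) = c"
| "tval e Zero = 0"
| "tval e (Plus s t) = tval e s + tval e t"
| "tval e (Minus t) = - tval e t"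

text \<open>Satisfaction in the substructure with universe A (operations inherited
  from the ambient group); quantifiers range over A.\<close>
primrec sat :: "'a::ab_group_add set \<Rightarrow> (nat \<Rightarrow> 'a) \<Rightarrow> 'a fm \<Rightarrow> bool" where
  "sat A e FFalse = False"
| "sat A e (Eq s t) = (tval e s = tval e t)"
| "sat A e (FNot f) = (\<not> sat A e f)"
| "sat A e (FAnd f g) = (sat A e f \<and> sat A e g)"
| "sat A e (FOr f g) = (sat A e f \<or> sat A e g)"
| "sat A e (FImp f g) = (sat A e f \<longrightarrow> sat A e g)"
| "sat A e (FEx x f) = (\<exists>a\<in>A. sat A (e(x := a)) f)"
| "sat A e (FAll x f) = (\<forall>a\<in>A. sat A (e(x := a)) f)"

primrec tvars :: "'a trm \<Rightarrow> nat set" where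
  "tvars (Var n) = {n}"
| "tvars (Cst c) = {}"
| "tvars Zero = {}"
| "tvars (Plus s t) = tvars s \<union> tvars t"
| "tvars (Minus t) = tvars t"

primrec tconsts :: "'a trm \<Rightarrow> 'a set" where
  "tconsts (Var n) = {}"
| "tconsts (Cst c) = {c}"
| "tconsts Zero = {}"
| "tconsts (Plus s t) = tconsts s \<union> tconsts t"
| "tconsts (Minus t) = tconsts t"

primrec fvars :: "'a fm \<Rightarrow> nat set" where
  "fvars FFalse = {}"
| "fvars (Eq s t) = tvars s \<union> tvars t"
| "fvars (FNot f) = fvars f"
| "fvars (FAnd f g) = fvars f \<union> fvars g"
| "fvars (FOr f g) = fvars f \<union> fvars g"
| "fvars (FImp f g) = fvars f \<union> fvars g"
| "fvars (FEx x f) = fvars f - {x}"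
| "fvars (FAll x f) = fvars f - {x}"

primrec fconsts :: "'a fm \<Rightarrow> 'a set" where
  "fconsts FFalse = {}"
| "fconsts (Eq s t) = tconsts s \<union> tconsts t"
| "fconsts (FNot f) = fconsts f"
| "fconsts (FAnd f g) = fconsts f \<union> fconsts g"
| "fconsts (FOr f g) = fconsts f \<union> fconsts g"
| "fconsts (FImp f g) = fconsts f \<union> fconsts g"
| "fconsts (FEx x f) = fconsts f"
| "fconsts (FAll x f) = fconsts f"

definition sentence :: "'a fm \<Rightarrow> bool" where
  "sentence f \<longleftrightarrow> fvars f = {}"

text \<open>Th(A*): sentences with constants from A true in the structure with universe A.
  (For a sentence the environment is irrelevant; we quantify over all of them.)\<close>
definition Th :: "'a::ab_group_add set \<Rightarrow> 'a fm set" where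
  "Th A = {f. sentence f \<and> fconsts f \<subseteq> A \<and> (\<forall>e. sat A e f)}"

primrec nsmul :: "nat \<Rightarrow> 'a::ab_group_add \<Rightarrow> 'a" where
  "nsmul 0 g = 0"
| "nsmul (Suc n) g = g + nsmul n g"

definition subgrp :: "'a::ab_group_add set \<Rightarrow> bool" where
  "subgrp A \<longleftrightarrow> 0 \<in> A \<and> (\<forall>x\<in>A. \<forall>y\<in>A. x + y \<in> A) \<and> (\<forall>x\<in>A. - x \<in> A)"

definition limsup_fam :: "'i set \<Rightarrow> ('i \<Rightarrow> 'i \<Rightarrow> bool) \<Rightarrow> ('i \<Rightarrow> 'b set) \<Rightarrow> 'b set" where
  "limsup_fam I le D = {\<theta>. \<forall>i\<in>I. \<exists>j\<in>I. le i j \<and> \<theta> \<in> D j}"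

definition liminf_fam :: "'i set \<Rightarrow> ('i \<Rightarrow> 'i \<Rightarrow> bool) \<Rightarrow> ('i \<Rightarrow> 'b set) \<Rightarrow> 'b set" where
  "liminf_fam I le D = {\<theta>. \<exists>i\<in>I. \<forall>j\<in>I. le i j \<longrightarrow> \<theta> \<in> D j}"

definition lim_fam_eq :: "'i set \<Rightarrow> ('i \<Rightarrow> 'i \<Rightarrow> bool) \<Rightarrow> ('i \<Rightarrow> 'b set) \<Rightarrow> 'b set \<Rightarrow> bool" where
  "lim_fam_eq I le D L \<longleftrightarrow> limsup_fam I le D = L \<and> liminf_fam I le D = L"

end

theory Submission
  imports Defs "HOL-Library.FuncSet"
begin

lemma nsmul_add: "nsmul (m + n) g = nsmul m g + nsmul n (g::'a::ab_group_add)"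
  by (induct m) (auto simp: algebra_simps)

lemma nsmul_mult: "nsmul (m * n) g = nsmul m (nsmul n (g::'a::ab_group_add))"
  by (induct m) (auto simp: nsmul_add)

lemma nsmul_plus: "nsmul n (g + h) = nsmul n g + nsmul n (h::'a::ab_group_add)"
  by (induct n) (auto simp: algebra_simps)

lemma nsmul_neg: "nsmul n (- g) = - nsmul n (g::'a::ab_group_add)"
  by (induct n) (auto simp: algebra_simps)

lemma nsmul_zero[simp]: "nsmul n (0::'a::ab_group_add) = 0"
  by (induct n) auto

lemma nsmul_one[simp]: "nsmul 1 (g::'a::ab_group_add) = g"
  by simp

lemma nsmul_pmult:
  assumes "\<forall>g::'a::ab_group_add. nsmul p g = 0"
  shows "nsmul (p * q) (g::'a) = 0"
  using assms by (simp add: nsmul_mult)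

lemma nsmul_mod:
  assumes "\<forall>g::'a::ab_group_add. nsmul p g = 0"
  shows "nsmul (n mod p) (g::'a) = nsmul n g"
proof -
  have "nsmul n g = nsmul (n mod p + p * (n div p)) g" by simp
  also have "\<dots> = nsmul (n mod p) g + nsmul (p * (n div p)) g" by (rule nsmul_add)
  also have "\<dots> = nsmul (n mod p) g" using nsmul_pmult[OF assms] by simp
  finally show ?thesis by (rule sym)
qed

lemma nsmul_pm1:
  assumes "\<forall>g::'a::ab_group_add. nsmul p g = 0" "p \<ge> 1"
  shows "nsmul (p - 1) (g::'a) = - g"
proof -
  have "nsmul (Suc (p - 1)) g = 0" using assms by simp
  then have "g + nsmul (p - 1) g = 0" by simp
  then show ?thesis by (metis neg_eq_iff_add_eq_0)
qed

lemma nsmul_pm1':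
  assumes "\<forall>g::'a::ab_group_add. nsmul p g = 0" "p \<ge> 1"
  shows "nsmul (p - Suc 0) (g::'a) = - g"
  using nsmul_pm1[OF assms] by simp

primrec subst :: "nat \<Rightarrow> 'a trm \<Rightarrow> 'a trm \<Rightarrow> 'a trm" where
  "subst x t0 (Var n) = (if n = x then t0 else Var n)"
| "subst x t0 (Cst c) = Cst c"
| "subst x t0 Zero = Zero"
| "subst x t0 (Plus s t) = Plus (subst x t0 s) (subst x t0 t)"
| "subst x t0 (Minus t) = Minus (subst x t0 t)"

lemma tval_subst: "tval e (subst x t0 s) = tval (e(x := tval e t0)) s"
  by (induct s) auto

lemma tvars_subst: "tvars (subst x t0 s) \<subseteq> (tvars s - {x}) \<union> tvars t0"
  by (induct s) auto

lemma tconsts_subst: "tconsts (subst x t0 s) \<subseteq> tconsts s \<union> tconsts t0"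
  by (induct s) auto

primrec cx :: "nat \<Rightarrow> nat \<Rightarrow> 'a trm \<Rightarrow> nat" where
  "cx p x (Var n) = (if n = x then 1 else 0)"
| "cx p x (Cst c) = 0"
| "cx p x Zero = 0"
| "cx p x (Plus s t) = cx p x s + cx p x t"
| "cx p x (Minus t) = (p - 1) * cx p x t"

lemma tval_cx:
  assumes "\<forall>g::'a::ab_group_add. nsmul p g = 0" "p \<ge> 1"
  shows "tval (e(x := (a::'a))) u = nsmul (cx p x u) a + tval e (subst x Zero u)"
proof (induct u)
  case (Plus s t) then show ?case by (simp add: nsmul_add algebra_simps)
next
  case (Minus t)
  have "nsmul ((p - 1) * cx p x t) a = - nsmul (cx p x t) a"
    by (simp only: nsmul_mult nsmul_pm1[OF assms])
  with Minus show ?case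
    by (simp add: nsmul_neg)
qed auto

primrec rep :: "nat \<Rightarrow> 'a trm \<Rightarrow> 'a trm" where
  "rep 0 w = Zero"
| "rep (Suc n) w = Plus w (rep n w)"

lemma tval_rep: "tval e (rep n w) = nsmul n (tval e w)"
  by (induct n) auto
lemma tvars_rep: "tvars (rep n w) \<subseteq> tvars w"
  by (induct n) auto
lemma tconsts_rep: "tconsts (rep n w) \<subseteq> tconsts w"
  by (induct n) auto

definition Rep :: "(nat \<Rightarrow> 'a::ab_group_add) \<Rightarrow> nat set \<Rightarrow> 'a set \<Rightarrow> 'a set" where
  "Rep e V C = {tval e t | t. tvars t \<subseteq> V \<and> tconsts t \<subseteq> C}"

definition iso :: "(nat \<Rightarrow> 'a::ab_group_add) \<Rightarrow> (nat \<Rightarrow> 'a) \<Rightarrow> nat set \<Rightarrow> 'a set \<Rightarrow> bool" where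
  "iso e e' V C \<longleftrightarrow> (\<forall>s t. tvars s \<subseteq> V \<longrightarrow> tvars t \<subseteq> V \<longrightarrow> tconsts s \<subseteq> C \<longrightarrow> tconsts t \<subseteq> C
      \<longrightarrow> (tval e s = tval e t \<longleftrightarrow> tval e' s = tval e' t))"

lemma iso_sym: "iso e e' V C \<Longrightarrow> iso e' e V C"
  unfolding iso_def by blast

lemma iso_mono: "iso e e' V C \<Longrightarrow> W \<subseteq> V \<Longrightarrow> iso e e' W C"
  unfolding iso_def by blast

lemma zero_iff:
  assumes ex: "\<forall>g::'a::ab_group_add. nsmul p g = 0" and pr: "prime p"
    and a: "(a::'a) \<notin> Rep e V C" and w: "tvars w \<subseteq> V" "tconsts w \<subseteq> C"
  shows "(nsmul k a + tval e w = 0) \<longleftrightarrow> (p dvd k \<and> tval e w = 0)"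
proof (cases "p dvd k")
  case True
  then obtain q where "k = p * q" by blast
  then show ?thesis using nsmul_pmult[OF ex] True by simp
next
  case False
  have "nsmul k a + tval e w \<noteq> 0"
  proof
    assume h: "nsmul k a + tval e w = 0"
    have k0: "k \<noteq> 0" using False by (metis dvd_0_right)
    have "coprime k p" using False pr by (metis prime_imp_coprime coprime_commute)
    then have "gcd k p = 1" by simp
    then obtain x y where xy: "k * x = p * y + 1" using bezout_nat[OF k0, of p] by auto
    have "a = nsmul (k * x) a" using xy by (simp add: nsmul_add nsmul_pmult[OF ex])
    also have "\<dots> = nsmul x (nsmul k a)" by (metis mult.commute nsmul_mult)
    also have "\<dots> = nsmul x (- tval e w)" using h by (metis add_eq_0_iff2)
    also have "\<dots> = tval e (rep x (Minus w))" by (simp add: tval_rep)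
    finally have "a \<in> Rep e V C" unfolding Rep_def using w tvars_rep[of x "Minus w"]
        tconsts_rep[of x "Minus w"] by fastforce
    then show False using a by simp
  qed
  then show ?thesis using False by simp
qed

lemma sum_single:
  assumes "finite X" "z \<in> X"
  shows "(\<Sum>y\<in>X. nsmul (if y = z then 1 else 0) y) = (z::'a::ab_group_add)"
proof -
  have "(\<Sum>y\<in>X. nsmul (if y = z then 1 else 0) y) = (\<Sum>y\<in>X. if y = z then y else 0)"
    by (rule sum.cong) auto
  also have "\<dots> = z" using assms by simp
  finally show ?thesis .
qed

lemma tval_sum:
  assumes ex: "\<forall>g::'a::ab_group_add. nsmul p g = 0" and p2: "p \<ge> 2"
    and X: "finite X" "e ` V \<subseteq> X" "C \<subseteq> X"
  shows "tvars t \<subseteq> V \<Longrightarrow> tconsts t \<subseteq> C \<Longrightarrow>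
     \<exists>f\<in>X \<rightarrow>\<^sub>E {..<p}. tval e t = (\<Sum>y\<in>X. nsmul (f y) (y::'a))"
proof (induct t)
  case (Var n)
  have en: "e n \<in> X" using Var X by auto
  show ?case
    by (rule bexI[of _ "restrict (\<lambda>y. if y = e n then 1 else 0) X"])
      (use sum_single[OF X(1) en] p2 in \<open>auto intro!: sum.cong\<close>)
next
  case (Cst c)
  have en: "c \<in> X" using Cst X by auto
  show ?case
    by (rule bexI[of _ "restrict (\<lambda>y. if y = c then 1 else 0) X"])
      (use sum_single[OF X(1) en] p2 in \<open>auto intro!: sum.cong\<close>)
next
  case Zero
  show ?case
    by (rule bexI[of _ "restrict (\<lambda>y. 0) X"]) (use p2 in auto)
next
  case (Plus s t)
  then obtain f1 f2 where f1: "f1 \<in> X \<rightarrow>\<^sub>E {..<p}" "tval e s = (\<Sum>y\<in>X. nsmul (f1 y) y)"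
    and f2: "f2 \<in> X \<rightarrow>\<^sub>E {..<p}" "tval e t = (\<Sum>y\<in>X. nsmul (f2 y) y)" by auto
  have "tval e (Plus s t) = (\<Sum>y\<in>X. nsmul ((f1 y + f2 y) mod p) y)"
    using f1 f2 by (simp add: nsmul_mod[OF ex] nsmul_add sum.distrib)
  also have "\<dots> = (\<Sum>y\<in>X. nsmul (restrict (\<lambda>y. (f1 y + f2 y) mod p) X y) y)"
    by (rule sum.cong) auto
  finally have eq: "tval e (Plus s t) = (\<Sum>y\<in>X. nsmul (restrict (\<lambda>y. (f1 y + f2 y) mod p) X y) y)" .
  have mem: "restrict (\<lambda>y. (f1 y + f2 y) mod p) X \<in> X \<rightarrow>\<^sub>E {..<p}"
    using p2 by (simp add: restrict_PiE_iff)
  from eq mem show ?case by blast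
next
  case (Minus t)
  then obtain f1 where f1: "f1 \<in> X \<rightarrow>\<^sub>E {..<p}" "tval e t = (\<Sum>y\<in>X. nsmul (f1 y) y)" by auto
  have "tval e (Minus t) = (\<Sum>y\<in>X. nsmul (((p - 1) * f1 y) mod p) y)"
  proof -
    have "\<And>y. nsmul (((p - 1) * f1 y) mod p) y = - nsmul (f1 y) y"
    proof -
      fix y
      have "nsmul (((p - 1) * f1 y) mod p) y = nsmul ((p - 1) * f1 y) y" by (rule nsmul_mod[OF ex])
      also have "\<dots> = nsmul (p - 1) (nsmul (f1 y) y)" by (rule nsmul_mult)
      also have "\<dots> = - nsmul (f1 y) y" using p2 by (intro nsmul_pm1[OF ex]) auto
      finally show "nsmul (((p - 1) * f1 y) mod p) y = - nsmul (f1 y) y" .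
    qed
    then show ?thesis using f1 by (simp only: tval.simps sum_negf)
  qed
  also have "\<dots> = (\<Sum>y\<in>X. nsmul (restrict (\<lambda>y. ((p - 1) * f1 y) mod p) X y) y)"
    by (rule sum.cong) auto
  finally have eq: "tval e (Minus t) = (\<Sum>y\<in>X. nsmul (restrict (\<lambda>y. ((p - 1) * f1 y) mod p) X y) y)" .
  have mem: "restrict (\<lambda>y. ((p - 1) * f1 y) mod p) X \<in> X \<rightarrow>\<^sub>E {..<p}"
    using p2 by (simp add: restrict_PiE_iff)
  from eq mem show ?case by blast
qed

lemma Rep_card:
  assumes ex: "\<forall>g::'a::ab_group_add. nsmul p g = 0" and p2: "p \<ge> 2"
    and V: "finite V" and C: "finite C"
  shows "finite (Rep e V (C::'a set)) \<and> card (Rep e V C) \<le> p ^ (card V + card C)"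
proof -
  define X where "X = e ` V \<union> C"
  have X: "finite X" "e ` V \<subseteq> X" "C \<subseteq> X" using V C by (auto simp: X_def)
  have sub: "Rep e V C \<subseteq> (\<lambda>f. \<Sum>y\<in>X. nsmul (f y) y) ` (X \<rightarrow>\<^sub>E {..<p})"
    unfolding Rep_def using tval_sum[OF ex p2 X] by blast
  have fin: "finite (X \<rightarrow>\<^sub>E {..<p})" using X by (simp add: finite_PiE)
  have "card (Rep e V C) \<le> card ((\<lambda>f. \<Sum>y\<in>X. nsmul (f y) y) ` (X \<rightarrow>\<^sub>E {..<p}))"
    by (rule card_mono[OF finite_imageI[OF fin] sub])
  also have "\<dots> \<le> card (X \<rightarrow>\<^sub>E {..<p})" by (rule card_image_le[OF fin])
  also have "\<dots> = p ^ card X" using X by (simp add: card_PiE)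
  also have "\<dots> \<le> p ^ (card V + card C)"
  proof -
    have "card X \<le> card (e ` V) + card C" unfolding X_def by (rule card_Un_le)
    also have "\<dots> \<le> card V + card C" using card_image_le[OF V] by simp
    finally show ?thesis using p2 by (intro power_increasing) auto
  qed
  finally show ?thesis using finite_subset[OF sub finite_imageI[OF fin]] by simp
qed


definition room :: "nat \<Rightarrow> 'a set \<Rightarrow> 'a set \<Rightarrow> nat \<Rightarrow> bool" where
  "room p A C m \<longleftrightarrow> infinite A \<or> p ^ (m + card C) < card A"

lemma room_mono: "m \<le> m' \<Longrightarrow> room p A C m' \<Longrightarrow> p \<ge> 1 \<Longrightarrow> room p A C m"
  unfolding room_def
  by (meson add_le_mono1 le_less_trans power_increasing)

lemma room_out:
  assumes ex: "\<forall>g::'a::ab_group_add. nsmul p g = 0" and p2: "p \<ge> 2"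
    and V: "finite V" and C: "finite C" and m: "card V \<le> m" and r: "room p A (C::'a set) m"
  shows "\<exists>a\<in>A. a \<notin> Rep e V C"
proof (rule ccontr)
  assume "\<not> ?thesis"
  then have sub: "A \<subseteq> Rep e V C" by auto
  have R: "finite (Rep e V C)" "card (Rep e V C) \<le> p ^ (card V + card C)"
    using Rep_card[OF ex p2 V C] by auto
  have "p ^ (card V + card C) \<le> p ^ (m + card C)" using p2 m by (intro power_increasing) auto
  have fA: "finite A" using finite_subset[OF sub R(1)] .
  have "card A \<le> card (Rep e V C)" by (rule card_mono[OF R(1) sub])
  then have "card A \<le> p ^ (m + card C)" using R(2) \<open>p ^ (card V + card C) \<le> p ^ (m + card C)\<close> by linarith
  then show False using r fA unfolding room_def by linarith
qed

lemma tval_in: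
  assumes "subgrp B" "e ` V \<subseteq> B" "tconsts t \<subseteq> B"
  shows "tvars t \<subseteq> V \<Longrightarrow> tval e t \<in> B"
  using assms(3) by (induct t) (use assms(1,2) in \<open>auto simp: subgrp_def\<close>)

lemma extend:
  assumes ex: "\<forall>g::'a::ab_group_add. nsmul p g = 0" and pr: "prime p"
    and iso: "iso e e' V C" and V: "finite V" and C: "finite C" and CB: "C \<subseteq> B"
    and B: "subgrp B" and eB: "e' ` V \<subseteq> B" and r: "room p B (C::'a set) (card V)"
  shows "\<exists>b\<in>B. iso (e(x := a)) (e'(x := b)) (insert x V) C"
proof -
  have p2: "p \<ge> 2" using pr by (simp add: prime_ge_2_nat)
  define V0 where "V0 = V - {x}"
  have iso0: "iso e e' V0 C" using iso_mono[OF iso] by (auto simp: V0_def)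
  have V0: "finite V0" "V0 \<subseteq> V" "insert x V = insert x V0" using V by (auto simp: V0_def)
  show ?thesis
  proof (cases "a \<in> Rep e V0 C")
    case True
    then obtain t0 where t0: "a = tval e t0" "tvars t0 \<subseteq> V0" "tconsts t0 \<subseteq> C"
      unfolding Rep_def by auto
    have bB: "tval e' t0 \<in> B" using tval_in[OF B eB, of t0] t0 V0 CB by auto
    have "iso (e(x := a)) (e'(x := tval e' t0)) (insert x V) C"
      unfolding iso_def
    proof (intro allI impI)
      fix s t :: "'a trm"
      assume st: "tvars s \<subseteq> insert x V" "tvars t \<subseteq> insert x V" "tconsts s \<subseteq> C" "tconsts t \<subseteq> C"
      have vs: "tvars (subst x t0 s) \<subseteq> V0" "tvars (subst x t0 t) \<subseteq> V0"
        using tvars_subst[of x t0 s] tvars_subst[of x t0 t] st t0 V0 by auto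
      have cs: "tconsts (subst x t0 s) \<subseteq> C" "tconsts (subst x t0 t) \<subseteq> C"
        using tconsts_subst[of x t0 s] tconsts_subst[of x t0 t] st t0 by auto
      show "(tval (e(x := a)) s = tval (e(x := a)) t) =
            (tval (e'(x := tval e' t0)) s = tval (e'(x := tval e' t0)) t)"
      proof -
        have "\<And>E::nat \<Rightarrow> 'a. \<And>r. tval (E(x := tval E t0)) r = tval E (subst x t0 r)"
          by (simp add: tval_subst)
        moreover have "(tval e (subst x t0 s) = tval e (subst x t0 t)) =
            (tval e' (subst x t0 s) = tval e' (subst x t0 t))"
          using iso0 vs cs unfolding iso_def by blast
        ultimately show ?thesis unfolding t0(1) by simp
      qed
    qed
    then show ?thesis using bB by blast
  next
    case False
    obtain b where b: "b \<in> B" "b \<notin> Rep e' V0 C"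
      using room_out[OF ex p2 V0(1) C _ r] card_mono[OF V V0(2)] by blast
    have "iso (e(x := a)) (e'(x := b)) (insert x V) C"
      unfolding iso_def
    proof (intro allI impI)
      fix s t :: "'a trm"
      assume st: "tvars s \<subseteq> insert x V" "tvars t \<subseteq> insert x V" "tconsts s \<subseteq> C" "tconsts t \<subseteq> C"
      define u where "u = Plus s (Minus t)"
      define w where "w = subst x Zero u"
      have wv: "tvars w \<subseteq> V0" "tconsts w \<subseteq> C"
        using tvars_subst[of x Zero u] tconsts_subst[of x Zero u] st V0
        by (auto simp: w_def u_def)
      have eqv: "\<And>E::nat \<Rightarrow> 'a. (tval E s = tval E t) \<longleftrightarrow> tval E u = 0"
        by (simp add: u_def)
      have ua: "tval (e(x := a)) u = nsmul (cx p x u) a + tval e w"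
        unfolding w_def by (rule tval_cx[OF ex]) (use p2 in auto)
      have ub: "tval (e'(x := b)) u = nsmul (cx p x u) b + tval e' w"
        unfolding w_def by (rule tval_cx[OF ex]) (use p2 in auto)
      have w0: "tval e w = tval e Zero \<longleftrightarrow> tval e' w = tval e' Zero"
      proof -
        have z: "tvars (Zero::'a trm) \<subseteq> V0" "tconsts (Zero::'a trm) \<subseteq> C" by auto
        show ?thesis using iso0 wv z unfolding iso_def by blast
      qed
      show "(tval (e(x := a)) s = tval (e(x := a)) t) =
            (tval (e'(x := b)) s = tval (e'(x := b)) t)"
        unfolding eqv ua ub zero_iff[OF ex pr False wv] zero_iff[OF ex pr b(2) wv]
        using w0 by simp
    qed
    then show ?thesis using b by blast
  qed
qed


primrec qd :: "'a fm \<Rightarrow> nat" where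
  "qd FFalse = 0"
| "qd (Eq s t) = 0"
| "qd (FNot f) = qd f"
| "qd (FAnd f g) = max (qd f) (qd g)"
| "qd (FOr f g) = max (qd f) (qd g)"
| "qd (FImp f g) = max (qd f) (qd g)"
| "qd (FEx x f) = Suc (qd f)"
| "qd (FAll x f) = Suc (qd f)"

lemma ext_both:
  assumes ex: "\<forall>g::'a::ab_group_add. nsmul p g = 0" and pr: "prime p"
    and A: "subgrp A" and B: "subgrp B" and C: "finite C" and CA: "C \<subseteq> A" and CB: "C \<subseteq> B"
    and V: "finite V" and iso: "iso e e' V (C::'a set)" and eA: "e ` V \<subseteq> A" and eB: "e' ` V \<subseteq> B"
    and rA: "room p A C (card V + Suc k)" and rB: "room p B C (card V + Suc k)"
  shows "(\<forall>a\<in>A. \<exists>b\<in>B. iso (e(x := a)) (e'(x := b)) (insert x V) C) \<and>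
         (\<forall>b\<in>B. \<exists>a\<in>A. iso (e(x := a)) (e'(x := b)) (insert x V) C)"
proof -
  have p1: "p \<ge> 1" using prime_gt_0_nat[OF pr] by simp
  have rA0: "room p A C (card V)" by (rule room_mono[OF _ rA p1]) simp
  have rB0: "room p B C (card V)" by (rule room_mono[OF _ rB p1]) simp
  show ?thesis
  proof (intro conjI ballI)
    fix a assume "a \<in> A"
    show "\<exists>b\<in>B. iso (e(x := a)) (e'(x := b)) (insert x V) C"
      by (rule extend[OF ex pr iso V C CB B eB rB0])
  next
    fix b assume "b \<in> B"
    obtain a where "a \<in> A" "iso (e'(x := b)) (e(x := a)) (insert x V) C"
      using extend[OF ex pr iso_sym[OF iso] V C CA A eA rA0] by blast
    then show "\<exists>a\<in>A. iso (e(x := a)) (e'(x := b)) (insert x V) C"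
      using iso_sym by blast
  qed
qed

lemma ef:
  assumes ex: "\<forall>g::'a::ab_group_add. nsmul p g = 0" and pr: "prime p"
    and A: "subgrp A" and B: "subgrp B" and C: "finite C" and CA: "C \<subseteq> A" and CB: "C \<subseteq> B"
  shows "finite V \<Longrightarrow> fvars \<phi> \<subseteq> V \<Longrightarrow> fconsts \<phi> \<subseteq> C \<Longrightarrow> iso e e' V (C::'a set)
    \<Longrightarrow> e ` V \<subseteq> A \<Longrightarrow> e' ` V \<subseteq> B \<Longrightarrow> room p A C (card V + qd \<phi>)
    \<Longrightarrow> room p B C (card V + qd \<phi>) \<Longrightarrow> sat A e \<phi> \<longleftrightarrow> sat B e' \<phi>"
proof (induct \<phi> arbitrary: e e' V)
  have p1: "p \<ge> 1" using prime_gt_0_nat[OF pr] by simp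
  {
    case (Eq s t)
    then show ?case unfolding iso_def by simp
  next
    case FFalse then show ?case by simp
  next
    case (FNot f) then show ?case by simp
  next
    case (FAnd f g)
    have "room p A C (card V + qd f)" "room p B C (card V + qd f)"
         "room p A C (card V + qd g)" "room p B C (card V + qd g)"
      by (auto intro!: room_mono[OF _ FAnd.prems(7) p1] room_mono[OF _ FAnd.prems(8) p1])
    then show ?case using FAnd by auto
  next
    case (FOr f g)
    have "room p A C (card V + qd f)" "room p B C (card V + qd f)"
         "room p A C (card V + qd g)" "room p B C (card V + qd g)"
      by (auto intro!: room_mono[OF _ FOr.prems(7) p1] room_mono[OF _ FOr.prems(8) p1])
    then show ?case using FOr by auto
  next
    case (FImp f g)
    have "room p A C (card V + qd f)" "room p B C (card V + qd f)"
         "room p A C (card V + qd g)" "room p B C (card V + qd g)"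
      by (auto intro!: room_mono[OF _ FImp.prems(7) p1] room_mono[OF _ FImp.prems(8) p1])
    then show ?case using FImp by auto
  next
    case (FEx x f)
    have V': "finite (insert x V)" using FEx.prems(1) by simp
    have cV: "card (insert x V) \<le> Suc (card V)" by (simp add: card_insert_le_m1)
    have fv: "fvars f \<subseteq> insert x V" using FEx.prems(2) by auto
    have fc: "fconsts f \<subseteq> C" using FEx.prems(3) by simp
    have rA: "room p A C (card (insert x V) + qd f)"
      by (rule room_mono[OF _ FEx.prems(7) p1]) (use cV in simp)
    have rB: "room p B C (card (insert x V) + qd f)"
      by (rule room_mono[OF _ FEx.prems(8) p1]) (use cV in simp)
    have EB: "(\<forall>a\<in>A. \<exists>b\<in>B. iso (e(x := a)) (e'(x := b)) (insert x V) C) \<and>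
         (\<forall>b\<in>B. \<exists>a\<in>A. iso (e(x := a)) (e'(x := b)) (insert x V) C)"
      using ext_both[OF ex pr A B C CA CB FEx.prems(1,4,5,6)] FEx.prems(7,8) by simp
    have IH: "\<And>a b. a \<in> A \<Longrightarrow> b \<in> B \<Longrightarrow> iso (e(x := a)) (e'(x := b)) (insert x V) C \<Longrightarrow>
        sat A (e(x := a)) f \<longleftrightarrow> sat B (e'(x := b)) f"
    proof -
      fix a b assume ab: "a \<in> A" "b \<in> B" "iso (e(x := a)) (e'(x := b)) (insert x V) C"
      show "sat A (e(x := a)) f \<longleftrightarrow> sat B (e'(x := b)) f"
        by (rule FEx.hyps[OF V' fv fc ab(3) _ _ rA rB]) (use ab FEx.prems(5,6) in auto)
    qed
    show ?case using EB IH by (simp; metis)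
  next
    case (FAll x f)
    have V': "finite (insert x V)" using FAll.prems(1) by simp
    have cV: "card (insert x V) \<le> Suc (card V)" by (simp add: card_insert_le_m1)
    have fv: "fvars f \<subseteq> insert x V" using FAll.prems(2) by auto
    have fc: "fconsts f \<subseteq> C" using FAll.prems(3) by simp
    have rA: "room p A C (card (insert x V) + qd f)"
      by (rule room_mono[OF _ FAll.prems(7) p1]) (use cV in simp)
    have rB: "room p B C (card (insert x V) + qd f)"
      by (rule room_mono[OF _ FAll.prems(8) p1]) (use cV in simp)
    have EB: "(\<forall>a\<in>A. \<exists>b\<in>B. iso (e(x := a)) (e'(x := b)) (insert x V) C) \<and>
         (\<forall>b\<in>B. \<exists>a\<in>A. iso (e(x := a)) (e'(x := b)) (insert x V) C)"
      using ext_both[OF ex pr A B C CA CB FAll.prems(1,4,5,6)] FAll.prems(7,8) by simp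
    have IH: "\<And>a b. a \<in> A \<Longrightarrow> b \<in> B \<Longrightarrow> iso (e(x := a)) (e'(x := b)) (insert x V) C \<Longrightarrow>
        sat A (e(x := a)) f \<longleftrightarrow> sat B (e'(x := b)) f"
    proof -
      fix a b assume ab: "a \<in> A" "b \<in> B" "iso (e(x := a)) (e'(x := b)) (insert x V) C"
      show "sat A (e(x := a)) f \<longleftrightarrow> sat B (e'(x := b)) f"
        by (rule FAll.hyps[OF V' fv fc ab(3) _ _ rA rB]) (use ab FAll.prems(5,6) in auto)
    qed
    show ?case using EB IH by (simp; metis)
  }
qed


lemma finite_tconsts: "finite (tconsts t)"
  by (induct t) auto

lemma finite_fconsts: "finite (fconsts f)"
  by (induct f) (auto simp: finite_tconsts)

lemma gen_subgrp:
  assumes ex: "\<forall>g::'a::ab_group_add. nsmul p g = 0" and p2: "p \<ge> 2" and X: "finite (X::'a set)"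
  shows "subgrp (Rep e {} X) \<and> finite (Rep e {} X) \<and> X \<subseteq> Rep e {} X"
proof (intro conjI)
  show "finite (Rep e {} X)" using Rep_card[OF ex p2 _ X, of "{}" e] by simp
  show "X \<subseteq> Rep e {} X"
  proof
    fix c assume "c \<in> X"
    then show "c \<in> Rep e {} X" unfolding Rep_def by (intro CollectI exI[of _ "Cst c"]) auto
  qed
  show "subgrp (Rep e {} X)"
    unfolding subgrp_def
  proof (intro conjI ballI)
    show "0 \<in> Rep e {} X" unfolding Rep_def by (intro CollectI exI[of _ "Zero"]) auto
  next
    fix x y assume "x \<in> Rep e {} X" "y \<in> Rep e {} X"
    then obtain s t where "x = tval e s" "tvars s \<subseteq> {}" "tconsts s \<subseteq> X"
      "y = tval e t" "tvars t \<subseteq> {}" "tconsts t \<subseteq> X" unfolding Rep_def by blast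
    then show "x + y \<in> Rep e {} X" unfolding Rep_def by (intro CollectI exI[of _ "Plus s t"]) auto
  next
    fix x assume "x \<in> Rep e {} X"
    then obtain s where "x = tval e s" "tvars s \<subseteq> {}" "tconsts s \<subseteq> X"
      unfolding Rep_def by blast
    then show "- x \<in> Rep e {} X" unfolding Rep_def by (intro CollectI exI[of _ "Minus s"]) auto
  qed
qed

lemma exists_big:
  assumes ex: "\<forall>g::'a::ab_group_add. nsmul p g = 0" and p2: "p \<ge> 2"
    and inf: "infinite (UNIV :: 'a set)" and F: "finite (F::'a set)"
  shows "\<exists>A. subgrp A \<and> finite A \<and> F \<subseteq> A \<and> N < card A"
proof -
  obtain Y :: "'a set" where Y: "finite Y" "card Y = Suc N"
    using infinite_arbitrarily_large[OF inf] by blast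
  define X where "X = F \<union> Y"
  have X: "finite X" using F Y by (simp add: X_def)
  define A where "A = Rep (\<lambda>_. 0) {} X"
  have G: "subgrp A" "finite A" "X \<subseteq> A" using gen_subgrp[OF ex p2 X] by (auto simp: A_def)
  have "card Y \<le> card A" using G by (intro card_mono) (auto simp: X_def)
  then show ?thesis using G Y by (intro exI[of _ A]) (auto simp: X_def)
qed

lemma good:
  assumes ex: "\<forall>g::'a::ab_group_add. nsmul p g = 0" and pr: "prime p"
    and inf: "infinite (UNIV :: 'a set)"
    and A: "subgrp A" "finite A" and CA: "fconsts \<theta> \<subseteq> (A::'a set)"
    and sen: "sentence \<theta>" and big: "p ^ (qd \<theta> + card (fconsts \<theta>)) < card A"
  shows "sat A e \<theta> \<longleftrightarrow> sat UNIV e \<theta>"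
proof (rule ef[OF ex pr A(1) _ finite_fconsts CA, where B=UNIV and V="{}" and \<phi>=\<theta>])
  show "subgrp (UNIV :: 'a set)" by (simp add: subgrp_def)
  show "iso e e {} (fconsts \<theta>)" unfolding iso_def by simp
  show "room p A (fconsts \<theta>) (card {} + qd \<theta>)" using big by (simp add: room_def)
  show "room p UNIV (fconsts \<theta>) (card {} + qd \<theta>)" using inf by (simp add: room_def)
qed (use sen in \<open>auto simp: sentence_def\<close>)

theorem mainTheorem12:
  fixes p :: nat
  assumes "prime p"
    and "infinite (UNIV :: 'a::ab_group_add set)"
    and "\<forall>g::'a. nsmul p g = 0"
  shows "lim_fam_eq {A :: 'a set. subgrp A \<and> finite A} (\<subseteq>) Th (Th (UNIV :: 'a set))"
proof -
  note pr = assms(1) and inf = assms(2) and ex = assms(3)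
  have p2: "p \<ge> 2" using pr by (simp add: prime_ge_2_nat)
  define I where "I = {A :: 'a set. subgrp A \<and> finite A}"
  define N where "N = (\<lambda>\<theta>::'a fm. p ^ (qd \<theta> + card (fconsts \<theta>)))"
  have toS: "\<theta> \<in> Th UNIV" if "\<theta> \<in> Th j" "j \<in> I" "N \<theta> < card j" for \<theta> j
    using that good[OF ex pr inf, of j \<theta>] by (auto simp: Th_def I_def N_def)
  have fromS: "\<theta> \<in> Th j" if "\<theta> \<in> Th UNIV" "j \<in> I" "fconsts \<theta> \<subseteq> j" "N \<theta> < card j" for \<theta> j
    using that good[OF ex pr inf, of j \<theta>] by (auto simp: Th_def I_def N_def)
  have big: "\<exists>j\<in>I. F \<subseteq> j \<and> M < card j" if "finite F" for F M
    using exists_big[OF ex p2 inf that, of M] by (auto simp: I_def)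
  have z: "{0} \<in> I" by (simp add: I_def subgrp_def)
  have sup: "limsup_fam I (\<subseteq>) Th = Th UNIV"
  proof
    show "limsup_fam I (\<subseteq>) Th \<subseteq> Th UNIV"
    proof
      fix \<theta> assume th: "\<theta> \<in> limsup_fam I (\<subseteq>) Th"
      obtain i where i: "i \<in> I" "fconsts \<theta> \<subseteq> i" "N \<theta> < card i"
        using big[OF finite_fconsts] by blast
      obtain j where j: "j \<in> I" "i \<subseteq> j" "\<theta> \<in> Th j"
        using th i unfolding limsup_fam_def by blast
      have "card i \<le> card j" using i j by (intro card_mono) (auto simp: I_def)
      then show "\<theta> \<in> Th UNIV" using toS[OF j(3) j(1)] i by simp
    qed
  next
    show "Th UNIV \<subseteq> limsup_fam I (\<subseteq>) Th"
    proof
      fix \<theta> assume th: "\<theta> \<in> Th (UNIV :: 'a set)"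
      show "\<theta> \<in> limsup_fam I (\<subseteq>) Th"
        unfolding limsup_fam_def
      proof (intro CollectI ballI)
        fix i assume i: "i \<in> I"
        have fin: "finite (i \<union> fconsts \<theta>)" using i finite_fconsts by (auto simp: I_def)
        obtain j where j: "j \<in> I" "i \<union> fconsts \<theta> \<subseteq> j" "N \<theta> < card j"
          using big[OF fin] by blast
        then show "\<exists>j\<in>I. i \<subseteq> j \<and> \<theta> \<in> Th j" using fromS[OF th] by blast
      qed
    qed
  qed
  have inf': "liminf_fam I (\<subseteq>) Th = Th UNIV"
  proof
    show "liminf_fam I (\<subseteq>) Th \<subseteq> Th UNIV"
    proof
      fix \<theta> assume th: "\<theta> \<in> liminf_fam I (\<subseteq>) Th"
      then obtain i where i: "i \<in> I" "\<forall>j\<in>I. i \<subseteq> j \<longrightarrow> \<theta> \<in> Th j"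
        unfolding liminf_fam_def by blast
      obtain j where j: "j \<in> I" "i \<subseteq> j" "N \<theta> < card j"
      proof -
        have "finite i" using i by (auto simp: I_def)
        then show ?thesis using big[of i "N \<theta>"] that by blast
      qed
      show "\<theta> \<in> Th UNIV" using toS[of \<theta> j] i j by blast
    qed
  next
    show "Th UNIV \<subseteq> liminf_fam I (\<subseteq>) Th"
    proof
      fix \<theta> assume th: "\<theta> \<in> Th (UNIV :: 'a set)"
      obtain i where i: "i \<in> I" "fconsts \<theta> \<subseteq> i" "N \<theta> < card i"
        using big[OF finite_fconsts] by blast
      have "\<forall>j\<in>I. i \<subseteq> j \<longrightarrow> \<theta> \<in> Th j"
      proof (intro ballI impI)
        fix j assume j: "j \<in> I" "i \<subseteq> j"
        have "card i \<le> card j" using i j by (intro card_mono) (auto simp: I_def)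
        then show "\<theta> \<in> Th j" using fromS[OF th j(1)] i j by auto
      qed
      then show "\<theta> \<in> liminf_fam I (\<subseteq>) Th" using i unfolding liminf_fam_def by blast
    qed
  qed
  show ?thesis using sup inf' unfolding lim_fam_eq_def I_def by simp
qed

end
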